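(* Let $L$ be a Lie algebra over a field $K$ of characteristic different from $2$ and $3$. If $L$ has a subalgebra of codimension $1$ which is not an ideal, then $L$ possesses a nonzero commutative $2$-cocycle.
   Context: A commutative $2$-cocycle on $L$ is a symmetric bilinear form $\varphi:L\times L\to K$ such that $\varphi([x,y],z)+\varphi([z,x],y)+\varphi([y,z],x)=0$ for all $x,y,z\in L$. *)

theory Defs
  imports Complex_Main
begin

definition lie_algebra ::
  "('k::field \<Rightarrow> 'v::ab_group_add \<Rightarrow> 'v) \<Rightarrow> ('v \<Rightarrow> 'v \<Rightarrow> 'v) \<Rightarrow> bool" where
  "lie_algebra scale br \<longleftrightarrow>
     vector_space scale \<and>
     (\<forall>x. Vector_Spaces.linear scale scale (br x)) \<and>
     (\<forall>y. Vector_Spaces.linear scale scale (\<lambda>x. br x y)) \<and>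
     (\<forall>x. br x x = 0) \<and>
     (\<forall>x y z. br x (br y z) + br y (br z x) + br z (br x y) = 0)"

definition lie_subalgebra ::
  "('k::field \<Rightarrow> 'v::ab_group_add \<Rightarrow> 'v) \<Rightarrow> ('v \<Rightarrow> 'v \<Rightarrow> 'v) \<Rightarrow> 'v set \<Rightarrow> bool" where
  "lie_subalgebra scale br S \<longleftrightarrow>
     module.subspace scale S \<and> (\<forall>x\<in>S. \<forall>y\<in>S. br x y \<in> S)"

definition lie_ideal ::
  "('k::field \<Rightarrow> 'v::ab_group_add \<Rightarrow> 'v) \<Rightarrow> ('v \<Rightarrow> 'v \<Rightarrow> 'v) \<Rightarrow> 'v set \<Rightarrow> bool" where
  "lie_ideal scale br I \<longleftrightarrow>
     module.subspace scale I \<and> (\<forall>x\<in>I. \<forall>y. br x y \<in> I \<and> br y x \<in> I)"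

definition codim_one ::
  "('k::field \<Rightarrow> 'v::ab_group_add \<Rightarrow> 'v) \<Rightarrow> 'v set \<Rightarrow> bool" where
  "codim_one scale S \<longleftrightarrow>
     (\<exists>v. v \<notin> S \<and> (\<forall>x. \<exists>c. \<exists>s\<in>S. x = scale c v + s))"

definition comm_2_cocycle ::
  "('k::field \<Rightarrow> 'v::ab_group_add \<Rightarrow> 'v) \<Rightarrow> ('v \<Rightarrow> 'v \<Rightarrow> 'v) \<Rightarrow> ('v \<Rightarrow> 'v \<Rightarrow> 'k) \<Rightarrow> bool" where
  "comm_2_cocycle scale br \<phi> \<longleftrightarrow>
     (\<forall>x. Vector_Spaces.linear scale (*) (\<phi> x)) \<and>
     (\<forall>y. Vector_Spaces.linear scale (*) (\<lambda>x. \<phi> x y)) \<and>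
     (\<forall>x y. \<phi> x y = \<phi> y x) \<and>
     (\<forall>x y z. \<phi> (br x y) z + \<phi> (br z x) y + \<phi> (br y z) x = 0)"

end

theory Submission
  imports Defs
begin

theorem lemma2p2:
  fixes scale :: "'k::field \<Rightarrow> 'v::ab_group_add \<Rightarrow> 'v"
    and br :: "'v \<Rightarrow> 'v \<Rightarrow> 'v"
    and S :: "'v set"
  assumes "lie_algebra scale br"
    and "(2::'k) \<noteq> 0" and "(3::'k) \<noteq> 0"
    and "lie_subalgebra scale br S"
    and "codim_one scale S"
    and "\<not> lie_ideal scale br S"
  shows "\<exists>\<phi>. comm_2_cocycle scale br \<phi> \<and> (\<exists>x y. \<phi> x y \<noteq> 0)"
proof -
  have vs: "vector_space scale" and linL: "\<And>x. Vector_Spaces.linear scale scale (br x)"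
    and linR: "\<And>y. Vector_Spaces.linear scale scale (\<lambda>x. br x y)"
    and alt: "\<And>x. br x x = 0"
    using assms(1) unfolding lie_algebra_def by auto
  interpret V: vector_space scale by (rule vs)
  have brL_add: "br x (a + b) = br x a + br x b" for x a b using linL[of x, unfolded Vector_Spaces.linear_iff] by auto
  have brL_sc: "br x (scale c a) = scale c (br x a)" for x c a using linL[of x, unfolded Vector_Spaces.linear_iff] by auto
  have brR_add: "br (a + b) y = br a y + br b y" for y a b using linR[of y, unfolded Vector_Spaces.linear_iff] by auto
  have brR_sc: "br (scale c a) y = scale c (br a y)" for y c a using linR[of y, unfolded Vector_Spaces.linear_iff] by auto
  have anti: "br s t = - br t s" for s t
  proof -
    have "0 = br (s + t) (s + t)" by (simp add: alt)
    also have "\<dots> = br s t + br t s" by (simp only: brL_add brR_add alt[of s] alt[of t] add_0_left add_0_right add.assoc) (rule add.commute)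
    finally have "br s t + br t s = 0" by (rule sym)
    thus ?thesis by (simp add: eq_neg_iff_add_eq_0)
  qed
  have sub: "V.subspace S" and Sbr: "\<And>x y. x \<in> S \<Longrightarrow> y \<in> S \<Longrightarrow> br x y \<in> S"
    using assms(4) unfolding lie_subalgebra_def by auto
  have S0: "0 \<in> S" and Sadd: "\<And>x y. x \<in> S \<Longrightarrow> y \<in> S \<Longrightarrow> x + y \<in> S"
    and Ssc: "\<And>c x. x \<in> S \<Longrightarrow> scale c x \<in> S"
    using sub unfolding V.subspace_def by auto
  have Sdiff: "x - y \<in> S" if "x \<in> S" "y \<in> S" for x y
  proof -
    have "scale (-1) y \<in> S" using Ssc that by blast
    hence "- y \<in> S" by simp
    thus ?thesis using Sadd[OF that(1)] by (metis diff_conv_add_uminus)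
  qed
  obtain v where vS: "v \<notin> S" and dec: "\<And>x. \<exists>c. \<exists>s\<in>S. x = scale c v + s"
    using assms(5) unfolding codim_one_def by blast
  have uniq: "c = d" if "s \<in> S" "t \<in> S" "scale c v + s = scale d v + t" for c d s t
  proof (rule ccontr)
    assume cd: "c \<noteq> d"
    have "scale (c - d) v = t - s" using that(3)
      by (simp add: V.scale_left_diff_distrib algebra_simps)
    hence "scale (inverse (c - d)) (scale (c - d) v) \<in> S" using Ssc Sdiff[OF that(2,1)] by simp
    hence "v \<in> S" using cd by simp
    thus False using vS by simp
  qed
  define f where "f x = (THE c. \<exists>s\<in>S. x = scale c v + s)" for x
  have f_eq: "f (scale c v + s) = c" if "s \<in> S" for c s
    unfolding f_def
  proof (rule the_equality)
    show "\<exists>s'\<in>S. scale c v + s = scale c v + s'" using that by blast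
    fix d assume "\<exists>s'\<in>S. scale c v + s = scale d v + s'"
    then obtain t where "t \<in> S" "scale c v + s = scale d v + t" by blast
    from uniq[OF that this] show "d = c" by simp
  qed
  have fdec: "\<exists>s\<in>S. x = scale (f x) v + s" for x
  proof -
    obtain c s where "s \<in> S" "x = scale c v + s" using dec by blast
    thus ?thesis using f_eq by auto
  qed
  have f_add: "f (x + y) = f x + f y" for x y
  proof -
    obtain a s where st1: "s \<in> S" "x = scale a v + s" using dec by blast
    obtain b t where st2: "t \<in> S" "y = scale b v + t" using dec by blast
    have "x + y = scale (a + b) v + (s + t)" unfolding st1(2) st2(2)
      by (simp add: V.scale_left_distrib add_ac)
    hence "f (x + y) = a + b" using f_eq[OF Sadd[OF st1(1) st2(1)]] by simp
    moreover have "f x = a" using f_eq[OF st1(1)] st1(2) by simp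
    moreover have "f y = b" using f_eq[OF st2(1)] st2(2) by simp
    ultimately show ?thesis by simp
  qed
  have f_sc: "f (scale c x) = c * f x" for c x
  proof -
    obtain a s where st: "s \<in> S" "x = scale a v + s" using dec by blast
    have "scale c x = scale (c * a) v + scale c s" unfolding st(2)
      by (simp add: V.scale_right_distrib)
    hence "f (scale c x) = c * a" using f_eq[OF Ssc[OF st(1)]] by simp
    moreover have "f x = a" using f_eq[OF st(1)] st(2) by simp
    ultimately show ?thesis by simp
  qed
  have f_S: "f s = 0" if "s \<in> S" for s using f_eq[OF that, of 0] by simp
  have f_v: "f v = 1" using f_eq[OF S0, of 1] by simp
  have f_neg: "f (- x) = - f x" for x using f_sc[of "-1" x] by simp
  define g where "g y = f (br v y)" for y
  have key: "f (br x y) = f x * g y - f y * g x" for x y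
  proof -
    obtain a s where s: "s \<in> S" "x = scale a v + s" using dec by blast
    obtain b t where t: "t \<in> S" "y = scale b v + t" using dec by blast
    have fx: "f x = a" using s f_eq by simp
    have fy: "f y = b" using t f_eq by simp
    have gy: "g y = g t" unfolding g_def t(2)
      by (simp add: brL_add brL_sc alt f_add f_sc)
    have gx: "g x = g s" unfolding g_def s(2)
      by (simp add: brL_add brL_sc alt f_add f_sc)
    have "br x y = scale a (br v t) + scale b (br s v) + br s t
        + scale a (scale b (br v v))"
      unfolding s(2) t(2) by (simp add: brL_add brL_sc brR_add brR_sc add_ac V.scale_right_distrib mult.commute)
    hence "f (br x y) = a * g t + b * f (br s v) + f (br s t)"
      by (simp add: f_add f_sc alt g_def)
    also have "f (br s v) = - g s" unfolding g_def by (subst anti) (simp add: f_neg)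
    also have "f (br s t) = 0" using f_S Sbr s t by simp
    finally show ?thesis using gx gy fx fy by (simp add: algebra_simps)
  qed
  have vsK: "vector_space ((*) :: 'k \<Rightarrow> 'k \<Rightarrow> 'k)"
    unfolding vector_space_def by (simp add: algebra_simps)
  define \<phi> where "\<phi> x y = f x * f y" for x y
  have "comm_2_cocycle scale br \<phi>"
    unfolding comm_2_cocycle_def
  proof (intro conjI allI)
    fix x show "Vector_Spaces.linear scale (*) (\<phi> x)"
      unfolding Vector_Spaces.linear_iff \<phi>_def using vs vsK by (simp add: f_add f_sc algebra_simps)
  next
    fix y show "Vector_Spaces.linear scale (*) (\<lambda>x. \<phi> x y)"
      unfolding Vector_Spaces.linear_iff \<phi>_def using vs vsK by (simp add: f_add f_sc algebra_simps)
  next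
    fix x y show "\<phi> x y = \<phi> y x" unfolding \<phi>_def by simp
  next
    fix x y z show "\<phi> (br x y) z + \<phi> (br z x) y + \<phi> (br y z) x = 0"
      unfolding \<phi>_def key by (simp add: algebra_simps)
  qed
  moreover have "\<phi> v v \<noteq> 0" unfolding \<phi>_def f_v by simp
  ultimately show ?thesis by blast
qed

end
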